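(* Let $(R,\mathfrak m)$ be a commutative local ring, $n\ge 2$, and let $\varphi$ be a $2n\times2n$ alternating matrix over $R$ with Pfaffian $1$. Then ${\rm E}_{2n-1}(R)={\rm E}_\varphi(R)$.
   Context: ${\rm E}_m(R)$ is the subgroup of ${\rm SL}_m(R)$ generated by $I_m+\lambda e_{ij}$ ($i\neq j$, $\lambda\in R$). A square matrix is alternating if it is of the form $\nu-\nu^t$; alternating matrices of Pfaffian $1$ are invertible. Elements of $R^m$ are row vectors, ${}^t$ is transpose. For an invertible alternating $2n\times2n$ matrix $\varphi$ write $\varphi=\begin{pmatrix}0&-c\\ c^t&\nu\end{pmatrix}$, $\varphi^{-1}=\begin{pmatrix}0&d\\ -d^t&\mu\end{pmatrix}$ with $c,d\in R^{2n-1}$, and set $\alpha_\varphi(v)=I_{2n-1}+d^tv\nu$, $\beta_\varphi(v)=I_{2n-1}+\mu v^tc$; ${\rm E}_\varphi(R)$ is the subgroup of ${\rm GL}_{2n-1}(R)$ generated by all $\alpha_\varphi(v),\beta_\varphi(v)$, $v\in R^{2n-1}$. *)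

theory Defs
  imports "Jordan_Normal_Form.Determinant"
begin

definition is_ideal :: "'a::comm_ring_1 set \<Rightarrow> bool" where
  "is_ideal I \<longleftrightarrow> 0 \<in> I \<and> (\<forall>x\<in>I. \<forall>y\<in>I. x + y \<in> I) \<and> (\<forall>r. \<forall>x\<in>I. r * x \<in> I)"

definition maximal_ideal :: "'a::comm_ring_1 set \<Rightarrow> bool" where
  "maximal_ideal M \<longleftrightarrow> is_ideal M \<and> M \<noteq> UNIV \<and>
     (\<forall>J. is_ideal J \<and> M \<subseteq> J \<longrightarrow> J = M \<or> J = UNIV)"

definition local_ring :: "'a::comm_ring_1 itself \<Rightarrow> bool" where
  "local_ring _ \<longleftrightarrow> (\<exists>!M::'a set. maximal_ideal M)"

definition alternating :: "'a::comm_ring_1 mat \<Rightarrow> bool" where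
  "alternating A \<longleftrightarrow> (\<exists>\<nu> \<in> carrier_mat (dim_row A) (dim_row A). A = \<nu> - transpose_mat \<nu>)"

(* Pfaffian of a 2n x 2n matrix: sum over perfect matchings, encoded as permutations
   s with s(2i) < s(2i+1) and s(0) < s(2) < ... < s(2n-2). *)
definition pfaffian :: "'a::comm_ring_1 mat \<Rightarrow> 'a" where
  "pfaffian A = (let n = dim_row A div 2 in
     (\<Sum> p \<in> {p. p permutes {0..<2*n} \<and> (\<forall>i<n. p (2*i) < p (2*i+1))
                   \<and> (\<forall>i. i + 1 < n \<longrightarrow> p (2*i) < p (2*i+2))}.
        signof p * (\<Prod> i < n. A $$ (p (2*i), p (2*i+1)))))"

inductive_set gen_group :: "nat \<Rightarrow> 'a::comm_ring_1 mat set \<Rightarrow> 'a mat set"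
  for m :: nat and S :: "'a mat set" where
  one: "1\<^sub>m m \<in> gen_group m S"
| gen: "g \<in> S \<Longrightarrow> h \<in> gen_group m S \<Longrightarrow> g * h \<in> gen_group m S"
| inv: "g \<in> S \<Longrightarrow> g' \<in> carrier_mat m m \<Longrightarrow> g * g' = 1\<^sub>m m \<Longrightarrow> g' * g = 1\<^sub>m m \<Longrightarrow>
        h \<in> gen_group m S \<Longrightarrow> g' * h \<in> gen_group m S"

definition elem_mat :: "nat \<Rightarrow> nat \<Rightarrow> nat \<Rightarrow> 'a::comm_ring_1 \<Rightarrow> 'a mat" where
  "elem_mat m i j l = 1\<^sub>m m + mat m m (\<lambda>(k,k'). if k = i \<and> k' = j then l else 0)"

definition E_group :: "nat \<Rightarrow> 'a::comm_ring_1 mat set" where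
  "E_group m = gen_group m {elem_mat m i j l | i j l. i < m \<and> j < m \<and> i \<noteq> j}"

(* Block data of phi = [[0,-c],[c^t,nu]] and psi = phi^{-1} = [[0,d],[-d^t,mu]] (size 2n, m = 2n-1) *)
definition blk_c :: "'a::comm_ring_1 mat \<Rightarrow> 'a vec" where
  "blk_c A = vec (dim_row A - 1) (\<lambda>j. - A $$ (0, j + 1))"
definition blk_d :: "'a::comm_ring_1 mat \<Rightarrow> 'a vec" where
  "blk_d B = vec (dim_row B - 1) (\<lambda>j. B $$ (0, j + 1))"
definition blk_low :: "'a::comm_ring_1 mat \<Rightarrow> 'a mat" where
  "blk_low A = mat (dim_row A - 1) (dim_row A - 1) (\<lambda>(i,j). A $$ (i + 1, j + 1))"

definition outer :: "'a::comm_ring_1 vec \<Rightarrow> 'a vec \<Rightarrow> 'a mat" where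
  "outer x y = mat (dim_vec x) (dim_vec y) (\<lambda>(i,j). x $ i * y $ j)"

definition alpha_mat :: "'a::comm_ring_1 mat \<Rightarrow> 'a mat \<Rightarrow> 'a vec \<Rightarrow> 'a mat" where
  "alpha_mat \<phi> \<psi> v = 1\<^sub>m (dim_row \<phi> - 1) + outer (blk_d \<psi>) v * blk_low \<phi>"
definition beta_mat :: "'a::comm_ring_1 mat \<Rightarrow> 'a mat \<Rightarrow> 'a vec \<Rightarrow> 'a mat" where
  "beta_mat \<phi> \<psi> v = 1\<^sub>m (dim_row \<phi> - 1) + blk_low \<psi> * outer v (blk_c \<phi>)"

(* E_phi(R), psi being the inverse of phi *)
definition E_phi :: "'a::comm_ring_1 mat \<Rightarrow> 'a mat \<Rightarrow> 'a mat set" where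
  "E_phi \<phi> \<psi> = gen_group (dim_row \<phi> - 1)
     ({alpha_mat \<phi> \<psi> v | v. v \<in> carrier_vec (dim_row \<phi> - 1)} \<union>
      {beta_mat \<phi> \<psi> v | v. v \<in> carrier_vec (dim_row \<phi> - 1)})"

end

theory Submission
  imports Defs
begin

definition T :: "nat \<Rightarrow> 'a::comm_ring_1 vec \<Rightarrow> 'a vec \<Rightarrow> 'a mat" where
  "T m x y = 1\<^sub>m m + outer x y"

lemma outer_carrier[simp]: "x \<in> carrier_vec m \<Longrightarrow> y \<in> carrier_vec k \<Longrightarrow> outer x y \<in> carrier_mat m k"
  unfolding outer_def by auto
lemma outer_dims[simp]: "dim_row (outer x y) = dim_vec x" "dim_col (outer x y) = dim_vec y"
  unfolding outer_def by auto
lemma outer_index[simp]: "i < dim_vec x \<Longrightarrow> j < dim_vec y \<Longrightarrow> outer x y $$ (i,j) = x $ i * y $ j"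
  unfolding outer_def by auto

lemma T_carrier[simp]: "x \<in> carrier_vec m \<Longrightarrow> y \<in> carrier_vec m \<Longrightarrow> T m x y \<in> carrier_mat m m"
  unfolding T_def by auto
lemma T_dims[simp]: "x \<in> carrier_vec m \<Longrightarrow> y \<in> carrier_vec m \<Longrightarrow> dim_row (T m x y) = m"
   "x \<in> carrier_vec m \<Longrightarrow> y \<in> carrier_vec m \<Longrightarrow> dim_col (T m x y) = m"
  unfolding T_def by auto
lemma T_index: "x \<in> carrier_vec m \<Longrightarrow> y \<in> carrier_vec m \<Longrightarrow> i < m \<Longrightarrow> j < m \<Longrightarrow>
   T m x y $$ (i,j) = (if i = j then 1 else 0) + x $ i * y $ j"
  unfolding T_def by auto

lemma sum_delta_l: "(i::nat) < m \<Longrightarrow> (\<Sum>k\<in>{0..<m}. (if i = k then 1 else 0) * (f k::'a::comm_ring_1)) = f i"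
proof -
  assume i: "i < m"
  have "(\<Sum>k\<in>{0..<m}. (if i = k then 1 else 0) * f k) = (\<Sum>k\<in>{0..<m}. if k = i then f k else 0)"
    by (rule sum.cong, auto)
  also have "\<dots> = f i" using i by (subst sum.delta, simp_all)
  finally show ?thesis .
qed
lemma sum_delta_r: "(i::nat) < m \<Longrightarrow> (\<Sum>k\<in>{0..<m}. (f k::'a::comm_ring_1) * (if k = i then 1 else 0)) = f i"
proof -
  assume i: "i < m"
  have "(\<Sum>k\<in>{0..<m}. f k * (if k = i then 1 else 0)) = (\<Sum>k\<in>{0..<m}. if k = i then f k else 0)"
    by (rule sum.cong, auto)
  also have "\<dots> = f i" using i by (subst sum.delta, simp_all)
  finally show ?thesis .
qed

lemma T_mult_index:
  assumes x: "x \<in> carrier_vec m" and y: "y \<in> carrier_vec m" and z: "z \<in> carrier_vec m" and w: "w \<in> carrier_vec m"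
    and i: "i < m" and j: "j < m"
  shows "(T m x y * T m z w) $$ (i,j) = (if i = j then 1 else 0) + x $ i * y $ j + z $ i * w $ j + (y \<bullet> z) * x $ i * w $ j"
proof -
  have "(T m x y * T m z w) $$ (i,j) = (\<Sum>k\<in>{0..<m}. ((if i = k then 1 else 0) + x $ i * y $ k) * ((if k = j then 1 else 0) + z $ k * w $ j))"
    using assms by (simp add: scalar_prod_def T_index)
  also have "\<dots> = (\<Sum>k\<in>{0..<m}. (if i = k then 1 else 0) * ((if k = j then 1 else 0) + z $ k * w $ j))
      + (\<Sum>k\<in>{0..<m}. (x $ i * y $ k) * (if k = j then 1 else 0)) + (\<Sum>k\<in>{0..<m}. x $ i * w $ j * (y $ k * z $ k))"
    by (simp add: algebra_simps sum.distrib)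
  also have "\<dots> = ((if i = j then 1 else 0) + z $ i * w $ j) + x $ i * y $ j + x $ i * w $ j * (y \<bullet> z)"
    using i j z by (simp only: sum_delta_l sum_delta_r, simp add: scalar_prod_def sum_distrib_left)
  finally show ?thesis by (simp add: algebra_simps)
qed

lemma T_mult_col:
  assumes x: "x \<in> carrier_vec m" and y: "y \<in> carrier_vec m" and w: "w \<in> carrier_vec m"
    and yx: "y \<bullet> x = 0"
  shows "T m x y * T m x w = T m x (y + w)"
  by (rule eq_matI, insert assms, auto simp del: index_mult_mat(1) simp: T_mult_index T_index algebra_simps)

lemma T_mult_row:
  assumes x: "x \<in> carrier_vec m" and z: "z \<in> carrier_vec m" and w: "w \<in> carrier_vec m"
    and wz: "w \<bullet> z = 0"
  shows "T m x w * T m z w = T m (x + z) w"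
  by (rule eq_matI, insert assms, auto simp del: index_mult_mat(1) simp: T_mult_index T_index algebra_simps)

lemma T_zero_r[simp]: "x \<in> carrier_vec m \<Longrightarrow> T m x (0\<^sub>v m) = 1\<^sub>m m"
  by (rule eq_matI, auto simp: T_index)
lemma T_zero_l[simp]: "y \<in> carrier_vec m \<Longrightarrow> T m (0\<^sub>v m) y = 1\<^sub>m m"
  by (rule eq_matI, auto simp: T_index)

lemma T_inv:
  assumes x: "x \<in> carrier_vec m" and y: "y \<in> carrier_vec m" and yx: "y \<bullet> x = 0"
  shows "T m x y * T m x (- y) = 1\<^sub>m m" "T m x (- y) * T m x y = 1\<^sub>m m"
proof -
  have "T m x y * T m x (- y) = T m x (y + - y)" using assms by (intro T_mult_col, auto)
  also have "y + - y = 0\<^sub>v m" using y by auto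
  finally show "T m x y * T m x (- y) = 1\<^sub>m m" using x by simp
  have "(- y) \<bullet> x = 0" using assms by simp
  hence "T m x (- y) * T m x y = T m x (- y + y)" using assms by (intro T_mult_col, auto)
  also have "- y + y = 0\<^sub>v m" using y by auto
  finally show "T m x (- y) * T m x y = 1\<^sub>m m" using x by simp
qed

lemma T_mult_vec:
  assumes x: "x \<in> carrier_vec m" and y: "y \<in> carrier_vec m" and z: "z \<in> carrier_vec m"
  shows "T m x y *\<^sub>v z = z + (y \<bullet> z) \<cdot>\<^sub>v x"
proof (rule eq_vecI)
  show "dim_vec (T m x y *\<^sub>v z) = dim_vec (z + (y \<bullet> z) \<cdot>\<^sub>v x)" using assms by simp
  fix i assume "i < dim_vec (z + (y \<bullet> z) \<cdot>\<^sub>v x)"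
  hence i: "i < m" using assms by simp
  have "(T m x y *\<^sub>v z) $ i = (\<Sum>k\<in>{0..<m}. ((if i = k then 1 else 0) + x $ i * y $ k) * z $ k)"
    using assms i by (simp add: scalar_prod_def T_index)
  also have "\<dots> = (\<Sum>k\<in>{0..<m}. (if i = k then 1 else 0) * z $ k) + (\<Sum>k\<in>{0..<m}. x $ i * (y $ k * z $ k))"
    by (simp add: algebra_simps sum.distrib)
  also have "\<dots> = z $ i + x $ i * (y \<bullet> z)"
    using i z by (simp only: sum_delta_l, simp add: scalar_prod_def sum_distrib_left)
  finally show "(T m x y *\<^sub>v z) $ i = (z + (y \<bullet> z) \<cdot>\<^sub>v x) $ i" using i assms by (simp add: algebra_simps)
qed

lemma T_transpose: "x \<in> carrier_vec m \<Longrightarrow> y \<in> carrier_vec m \<Longrightarrow> transpose_mat (T m x y) = T m y x"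
  by (rule eq_matI, auto simp: T_index)

lemma mat_outer: assumes M: "M \<in> carrier_mat k m" and x: "x \<in> carrier_vec m" and y: "y \<in> carrier_vec l"
  shows "M * outer x y = outer (M *\<^sub>v x) y"
proof (rule eq_matI)
  fix i j assume "i < dim_row (outer (M *\<^sub>v x) y)" "j < dim_col (outer (M *\<^sub>v x) y)"
  hence i: "i < k" and j: "j < l" using assms by auto
  have "(M * outer x y) $$ (i,j) = (\<Sum>q\<in>{0..<m}. M $$ (i,q) * (x $ q * y $ j))"
    using assms i j by (simp add: scalar_prod_def)
  also have "\<dots> = (\<Sum>q\<in>{0..<m}. M $$ (i,q) * x $ q) * y $ j"
    by (subst sum_distrib_right, rule sum.cong, auto simp: algebra_simps)
  finally show "(M * outer x y) $$ (i,j) = outer (M *\<^sub>v x) y $$ (i,j)"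
    using assms i j by (simp add: scalar_prod_def)
qed (insert assms, auto)

lemma outer_mat: assumes M: "M \<in> carrier_mat m l" and x: "x \<in> carrier_vec k" and y: "y \<in> carrier_vec m"
  shows "outer x y * M = outer x (transpose_mat M *\<^sub>v y)"
proof (rule eq_matI)
  fix i j assume "i < dim_row (outer x (transpose_mat M *\<^sub>v y))" "j < dim_col (outer x (transpose_mat M *\<^sub>v y))"
  hence i: "i < k" and j: "j < l" using assms by auto
  have "(outer x y * M) $$ (i,j) = (\<Sum>q\<in>{0..<m}. (x $ i * y $ q) * M $$ (q,j))"
    using assms i j by (simp add: scalar_prod_def)
  also have "\<dots> = x $ i * (\<Sum>q\<in>{0..<m}. M $$ (q,j) * y $ q)"
    by (simp add: sum_distrib_left algebra_simps)
  finally show "(outer x y * M) $$ (i,j) = outer x (transpose_mat M *\<^sub>v y) $$ (i,j)"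
    using assms i j by (simp add: scalar_prod_def)
qed (insert assms, auto)

lemma T_conj:
  assumes g: "g \<in> carrier_mat m m" and g': "g' \<in> carrier_mat m m" and gg: "g * g' = 1\<^sub>m m"
    and x: "x \<in> carrier_vec m" and y: "y \<in> carrier_vec m"
  shows "g * T m x y * g' = T m (g *\<^sub>v x) (transpose_mat g' *\<^sub>v y)"
proof -
  have "g * T m x y = g * 1\<^sub>m m + g * outer x y"
    unfolding T_def using assms by (intro mult_add_distrib_mat[of g m m], auto)
  also have "\<dots> = g + outer (g *\<^sub>v x) y" using assms by (simp add: mat_outer)
  finally have "g * T m x y = g + outer (g *\<^sub>v x) y" .
  hence "g * T m x y * g' = (g + outer (g *\<^sub>v x) y) * g'" by simp
  also have "\<dots> = g * g' + outer (g *\<^sub>v x) y * g'"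
    using assms by (intro add_mult_distrib_mat[of _ m m], auto)
  also have "\<dots> = T m (g *\<^sub>v x) (transpose_mat g' *\<^sub>v y)"
    unfolding T_def gg using assms by (subst outer_mat[of g' m m _ m], auto)
  finally show ?thesis .
qed

lemma elem_T: assumes "i < m" "j < m"
  shows "elem_mat m i j l = T m (unit_vec m i) (l \<cdot>\<^sub>v unit_vec m j)"
  by (rule eq_matI, insert assms, auto simp: elem_mat_def T_index)

lemma gg_carrier: assumes "S \<subseteq> carrier_mat m m" "h \<in> gen_group m S" shows "h \<in> carrier_mat m m"
  using assms(2) by (induction h rule: gen_group.induct, insert assms(1), auto)

lemma gg_mult: assumes S: "S \<subseteq> carrier_mat m m" and h1: "h1 \<in> gen_group m S" and h2: "h2 \<in> gen_group m S"
  shows "h1 * h2 \<in> gen_group m S"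
  using h1
proof (induction h1 rule: gen_group.induct)
  case one
  then show ?case using gg_carrier[OF S h2] h2 by simp
next
  case (gen g h)
  have "g * h * h2 = g * (h * h2)" using gen gg_carrier[OF S] S h2 by (intro assoc_mult_mat, auto)
  then show ?case using gen by (auto intro: gen_group.gen)
next
  case (inv g g' h)
  have "g' * h * h2 = g' * (h * h2)" using inv gg_carrier[OF S] S h2 by (intro assoc_mult_mat, auto)
  then show ?case using inv by (auto intro: gen_group.inv)
qed

lemma gg_one: "1\<^sub>m m \<in> gen_group m S" by (rule gen_group.one)

lemma gg_gen: "S \<subseteq> carrier_mat m m \<Longrightarrow> g \<in> S \<Longrightarrow> g \<in> gen_group m S"
  using gen_group.gen[OF _ gen_group.one, of g S m] by auto

lemma gg_inv_gen: "g \<in> S \<Longrightarrow> g' \<in> carrier_mat m m \<Longrightarrow> g * g' = 1\<^sub>m m \<Longrightarrow> g' * g = 1\<^sub>m m \<Longrightarrow> g' \<in> gen_group m S"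
  using gen_group.inv[OF _ _ _ _ gen_group.one, of g S g' m] by auto

lemma gg_min:
  assumes one: "1\<^sub>m m \<in> H" and mult: "\<And>a b. a \<in> H \<Longrightarrow> b \<in> H \<Longrightarrow> a * b \<in> H"
    and gens: "S \<subseteq> H"
    and invs: "\<And>g g'. g \<in> S \<Longrightarrow> g' \<in> carrier_mat m m \<Longrightarrow> g * g' = 1\<^sub>m m \<Longrightarrow> g' * g = 1\<^sub>m m \<Longrightarrow> g' \<in> H"
  shows "gen_group m S \<subseteq> H"
proof
  fix h assume "h \<in> gen_group m S"
  then show "h \<in> H"
    by (induction h rule: gen_group.induct, insert assms, auto)
qed

lemma inv_unique: assumes "(g::'a::comm_ring_1 mat) \<in> carrier_mat m m" "g' \<in> carrier_mat m m" "h \<in> carrier_mat m m"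
  "g * g' = 1\<^sub>m m" "h * g = 1\<^sub>m m" shows "h = g'"
proof -
  have "h = h * (g * g')" using assms right_mult_one_mat[OF assms(3)] by simp
  also have "\<dots> = (h * g) * g'" using assms by (intro assoc_mult_mat[symmetric], auto)
  also have "\<dots> = g'" using assms by simp
  finally show ?thesis .
qed

definition SE :: "nat \<Rightarrow> 'a::comm_ring_1 mat set" where
  "SE m = {elem_mat m i j l | i j l. i < m \<and> j < m \<and> i \<noteq> j}"

lemma E_group_SE: "E_group m = gen_group m (SE m)" unfolding E_group_def SE_def ..

lemma SE_carrier: "SE m \<subseteq> carrier_mat m m" unfolding SE_def elem_mat_def by auto

lemma E_carrier: "h \<in> E_group m \<Longrightarrow> h \<in> carrier_mat m m"
  unfolding E_group_SE using gg_carrier[OF SE_carrier] by blast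
lemma E_mult: "a \<in> E_group m \<Longrightarrow> b \<in> E_group m \<Longrightarrow> a * b \<in> E_group m"
  unfolding E_group_SE using gg_mult[OF SE_carrier] by blast
lemma E_one: "1\<^sub>m m \<in> E_group m" unfolding E_group_SE by (rule gg_one)
lemma E_elem: "i < m \<Longrightarrow> j < m \<Longrightarrow> i \<noteq> j \<Longrightarrow> elem_mat m i j l \<in> E_group m"
  unfolding E_group_SE by (rule gg_gen[OF SE_carrier], auto simp: SE_def)

lemma T_smult: "x \<in> carrier_vec m \<Longrightarrow> y \<in> carrier_vec m \<Longrightarrow> T m (c \<cdot>\<^sub>v x) y = T m x (c \<cdot>\<^sub>v y)"
  by (rule eq_matI, auto simp: T_index)

lemma E_row0: assumes m: "0 < m" and z: "z \<in> carrier_vec m" and z0: "z $ 0 = 0"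
  shows "T m (unit_vec m 0) z \<in> E_group m"
proof -
  define tr where "tr k = vec m (\<lambda>j. if j < k then z $ j else 0)" for k
  have trc[simp]: "tr k \<in> carrier_vec m" for k unfolding tr_def by auto
  have "T m (unit_vec m 0) (tr k) \<in> E_group m" for k
  proof (induction k)
    case 0
    have "tr 0 = 0\<^sub>v m" unfolding tr_def by auto
    then show ?case using E_one by simp
  next
    case (Suc k)
    define w where "w = (if k < m then z $ k \<cdot>\<^sub>v unit_vec m k else 0\<^sub>v m)"
    have wc: "w \<in> carrier_vec m" unfolding w_def by auto
    have trS: "tr (Suc k) = tr k + w" unfolding tr_def w_def by (rule eq_vecI, auto simp: less_Suc_eq)
    have "tr k \<bullet> unit_vec m 0 = 0" using m z0 by (simp add: tr_def)
    hence "T m (unit_vec m 0) (tr (Suc k)) = T m (unit_vec m 0) (tr k) * T m (unit_vec m 0) w"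
      unfolding trS using wc by (intro T_mult_col[symmetric], auto)
    moreover have "T m (unit_vec m 0) w \<in> E_group m"
    proof (cases "k < m \<and> k \<noteq> 0")
      case True
      then show ?thesis using E_elem[of 0 m k "z $ k"] m by (simp add: w_def elem_T)
    next
      case False
      hence "w = 0\<^sub>v m" unfolding w_def using z0 by auto
      then show ?thesis using E_one by simp
    qed
    ultimately show ?case using Suc E_mult by metis
  qed
  moreover have "tr m = z" unfolding tr_def using z by (intro eq_vecI, auto)
  ultimately show ?thesis by metis
qed

lemma E_col0: assumes m: "0 < m" and x: "x \<in> carrier_vec m" and x0: "x $ 0 = 0"
  shows "T m x (unit_vec m 0) \<in> E_group m"
proof -
  define tr where "tr k = vec m (\<lambda>j. if j < k then x $ j else 0)" for k
  have trc[simp]: "tr k \<in> carrier_vec m" for k unfolding tr_def by auto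
  have "T m (tr k) (unit_vec m 0) \<in> E_group m" for k
  proof (induction k)
    case 0
    have "tr 0 = 0\<^sub>v m" unfolding tr_def by auto
    then show ?case using E_one by simp
  next
    case (Suc k)
    define w where "w = (if k < m \<and> k \<noteq> 0 then x $ k \<cdot>\<^sub>v unit_vec m k else 0\<^sub>v m)"
    have wc: "w \<in> carrier_vec m" unfolding w_def by auto
    have trS: "tr (Suc k) = tr k + w" unfolding tr_def w_def using x0 by (intro eq_vecI, auto simp: less_Suc_eq)
    have "unit_vec m 0 \<bullet> w = 0" using m unfolding w_def by auto
    hence "T m (tr (Suc k)) (unit_vec m 0) = T m (tr k) (unit_vec m 0) * T m w (unit_vec m 0)"
      unfolding trS using wc m by (intro T_mult_row[symmetric], auto)
    moreover have "T m w (unit_vec m 0) \<in> E_group m"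
    proof (cases "k < m \<and> k \<noteq> 0")
      case True
      then show ?thesis using E_elem[of k m 0 "x $ k"] m T_smult[of "unit_vec m k" m "unit_vec m 0" "x $ k"]
        by (simp add: w_def elem_T)
    next
      case False
      hence "w = 0\<^sub>v m" unfolding w_def by auto
      then show ?thesis using E_one by simp
    qed
    ultimately show ?case using Suc E_mult by metis
  qed
  moreover have "tr m = x" unfolding tr_def using x by (intro eq_vecI, auto)
  ultimately show ?thesis by metis
qed

lemma ideal_one_univ: "is_ideal (J::'a::comm_ring_1 set) \<Longrightarrow> 1 \<in> J \<Longrightarrow> J = UNIV"
  unfolding is_ideal_def by (metis UNIV_eq_I mult.right_neutral)

lemma nonunit_in_max:
  fixes x :: "'a::comm_ring_1"
  assumes loc: "local_ring TYPE('a)" and M: "maximal_ideal M" and nu: "\<forall>w. w * x \<noteq> 1"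
  shows "x \<in> M"
proof -
  define A where "A = {J::'a set. is_ideal J \<and> (\<forall>r. r * x \<in> J) \<and> 1 \<notin> J}"
  have "\<forall>C\<in>chains A. \<exists>U\<in>A. \<forall>X\<in>C. X \<subseteq> U"
  proof
    fix C assume C: "C \<in> chains A"
    show "\<exists>U\<in>A. \<forall>X\<in>C. X \<subseteq> U"
    proof (cases "C = {}")
      case True
      have "range (\<lambda>r. r * x) \<in> A" unfolding A_def is_ideal_def
      proof (intro CollectI conjI ballI allI)
        show "0 \<in> range (\<lambda>r. r * x)" by (rule range_eqI[of _ _ 0], simp)
        fix a b assume "a \<in> range (\<lambda>r. r * x)" "b \<in> range (\<lambda>r. r * x)"
        then obtain r s where "a = r * x" "b = s * x" by auto
        then show "a + b \<in> range (\<lambda>r. r * x)" by (intro range_eqI[of _ _ "r + s"], simp add: distrib_right)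
      next
        fix t a assume "a \<in> range (\<lambda>r. r * x)"
        then obtain r where "a = r * x" by auto
        then show "t * a \<in> range (\<lambda>r. r * x)" by (intro range_eqI[of _ _ "t * r"], simp add: mult.assoc)
      next
        show "1 \<notin> range (\<lambda>r. r * x)" using nu by auto
      qed auto
      then show ?thesis using True by auto
    next
      case False
      have CA: "C \<subseteq> A" and ch: "\<forall>X\<in>C. \<forall>Y\<in>C. X \<subseteq> Y \<or> Y \<subseteq> X"
        using C unfolding chains_def chain_subset_def by auto
      have "\<Union>C \<in> A" unfolding A_def
      proof (intro CollectI conjI)
        show "is_ideal (\<Union>C)" unfolding is_ideal_def
        proof (intro conjI ballI allI)
          obtain X where "X \<in> C" using False by auto
          then show "0 \<in> \<Union>C" using CA unfolding A_def is_ideal_def by auto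
        next
          fix a b assume "a \<in> \<Union>C" "b \<in> \<Union>C"
          then obtain X Y where X: "X \<in> C" "a \<in> X" and Y: "Y \<in> C" "b \<in> Y" by auto
          from ch X Y have "X \<subseteq> Y \<or> Y \<subseteq> X" by auto
          then show "a + b \<in> \<Union>C"
          proof
            assume "X \<subseteq> Y" then show ?thesis using X Y CA unfolding A_def is_ideal_def by blast
          next
            assume "Y \<subseteq> X" then show ?thesis using X Y CA unfolding A_def is_ideal_def by blast
          qed
        next
          fix r a assume "a \<in> \<Union>C"
          then obtain X where X: "X \<in> C" "a \<in> X" by auto
          then show "r * a \<in> \<Union>C" using CA unfolding A_def is_ideal_def by blast
        qed
        show "\<forall>r. r * x \<in> \<Union>C" using False CA unfolding A_def by blast
        show "1 \<notin> \<Union>C" using CA unfolding A_def by blast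
      qed
      then show ?thesis by auto
    qed
  qed
  from Zorn_Lemma2[OF this] obtain M0 where M0: "M0 \<in> A" and mx: "\<forall>X\<in>A. M0 \<subseteq> X \<longrightarrow> X = M0" by blast
  have "maximal_ideal M0" unfolding maximal_ideal_def
  proof (intro conjI allI impI)
    show "is_ideal M0" using M0 unfolding A_def by auto
    show "M0 \<noteq> UNIV" using M0 unfolding A_def by auto
    fix J assume J: "is_ideal J \<and> M0 \<subseteq> J"
    show "J = M0 \<or> J = UNIV"
    proof (cases "1 \<in> J")
      case True then show ?thesis using ideal_one_univ J by auto
    next
      case False
      have "J \<in> A" using J False M0 unfolding A_def by auto
      then show ?thesis using mx J by auto
    qed
  qed
  moreover from loc have "\<exists>!M::'a set. maximal_ideal M" unfolding local_ring_def .
  ultimately have "M0 = M" using M by auto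
  moreover have "1 * x \<in> M0" using M0 unfolding A_def by blast
  ultimately show ?thesis by simp
qed

lemma ideal_sum: "is_ideal M \<Longrightarrow> (\<And>i. i \<in> S \<Longrightarrow> f i \<in> M) \<Longrightarrow> sum f S \<in> M"
proof (induction S rule: infinite_finite_induct)
  case (infinite A) then show ?case unfolding is_ideal_def by auto
next
  case empty then show ?case unfolding is_ideal_def by auto
next
  case (insert x F) then show ?case unfolding is_ideal_def by auto
qed

lemma local_unit_entry:
  fixes c d :: "'a::comm_ring_1 vec"
  assumes loc: "local_ring TYPE('a)" and c: "c \<in> carrier_vec m" and d: "d \<in> carrier_vec m" and cd: "c \<bullet> d = 1"
  shows "\<exists>k<m. \<exists>w. w * d $ k = 1"
proof (rule ccontr)
  assume "\<not> ?thesis"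
  hence nu: "\<forall>k<m. \<forall>w. w * d $ k \<noteq> 1" by auto
  from loc obtain M :: "'a set" where M: "maximal_ideal M" unfolding local_ring_def by auto
  have idM: "is_ideal M" using M unfolding maximal_ideal_def by auto
  have "d $ k \<in> M" if "k < m" for k using nonunit_in_max[OF loc M] nu that by auto
  hence "c $ k * d $ k \<in> M" if "k < m" for k using idM that unfolding is_ideal_def by auto
  hence "c \<bullet> d \<in> M" unfolding scalar_prod_def using d by (intro ideal_sum[OF idM], auto)
  hence "M = UNIV" using cd ideal_one_univ[OF idM] by auto
  then show False using M unfolding maximal_ideal_def by auto
qed

definition invE :: "nat \<Rightarrow> 'a::comm_ring_1 mat \<Rightarrow> 'a mat \<Rightarrow> bool" where
  "invE m g g' \<longleftrightarrow> g \<in> E_group m \<and> g' \<in> E_group m \<and> g * g' = 1\<^sub>m m \<and> g' * g = 1\<^sub>m m"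

lemma invE_comp: assumes "invE m g g'" "invE m h h'" shows "invE m (h * g) (g' * h')"
proof -
  have c: "g \<in> carrier_mat m m" "g' \<in> carrier_mat m m" "h \<in> carrier_mat m m" "h' \<in> carrier_mat m m"
    using assms E_carrier unfolding invE_def by auto
  have "h * g * (g' * h') = h * (g * g') * h'" using c by (simp add: assoc_mult_mat[of _ m m _ m _ m])
  also have "\<dots> = 1\<^sub>m m" using assms c unfolding invE_def by simp
  finally have 1: "h * g * (g' * h') = 1\<^sub>m m" .
  have "g' * h' * (h * g) = g' * (h' * h) * g" using c by (simp add: assoc_mult_mat[of _ m m _ m _ m])
  also have "\<dots> = 1\<^sub>m m" using assms c unfolding invE_def by simp
  finally have 2: "g' * h' * (h * g) = 1\<^sub>m m" .
  show ?thesis using assms 1 2 E_mult unfolding invE_def by auto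
qed

lemma neg_smult_vec: "- (l \<cdot>\<^sub>v v) = (- l) \<cdot>\<^sub>v (v :: 'a::comm_ring_1 vec)"
  by (rule eq_vecI, auto)

lemma step_unit:
  fixes d :: "'a::comm_ring_1 vec"
  assumes d: "d \<in> carrier_vec m" and k: "k < m" and j: "j < m" and jk: "j \<noteq> k" and w: "w * d $ k = 1"
  shows "\<exists>e e'. invE m e e' \<and> (e *\<^sub>v d) $ j = 1 \<and> (e *\<^sub>v d) $ k = d $ k"
proof -
  define l where "l = w * (1 - d $ j)"
  define e where "e = T m (unit_vec m j) (l \<cdot>\<^sub>v unit_vec m k)"
  define e' where "e' = T m (unit_vec m j) (- (l \<cdot>\<^sub>v unit_vec m k))"
  have yx: "(l \<cdot>\<^sub>v unit_vec m k) \<bullet> unit_vec m j = 0" using j k jk by simp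
  have "e = elem_mat m j k l" unfolding e_def using j k by (simp add: elem_T)
  hence eE: "e \<in> E_group m" using E_elem j k jk by simp
  have "e' = elem_mat m j k (-l)" unfolding e'_def using j k by (simp add: elem_T neg_smult_vec)
  hence e'E: "e' \<in> E_group m" using E_elem j k jk by simp
  have inv: "e * e' = 1\<^sub>m m" "e' * e = 1\<^sub>m m" unfolding e_def e'_def using T_inv[OF _ _ yx] j k by auto
  have ed: "e *\<^sub>v d = d + ((l \<cdot>\<^sub>v unit_vec m k) \<bullet> d) \<cdot>\<^sub>v unit_vec m j"
    unfolding e_def using d j k by (intro T_mult_vec, auto)
  have "(l \<cdot>\<^sub>v unit_vec m k) \<bullet> d = l * d $ k" using d k by simp
  hence ed': "e *\<^sub>v d = d + (l * d $ k) \<cdot>\<^sub>v unit_vec m j" using ed by simp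
  have "l * d $ k = (1 - d $ j) * (w * d $ k)" unfolding l_def by (simp add: algebra_simps)
  hence "d $ j + l * d $ k = 1" using w by simp
  hence "(e *\<^sub>v d) $ j = 1" using ed' d j by simp
  moreover have "(e *\<^sub>v d) $ k = d $ k" using ed' d j k jk by simp
  ultimately show ?thesis using eE e'E inv unfolding invE_def by blast
qed

lemma mult_vec_carrier': "g \<in> E_group m \<Longrightarrow> d \<in> carrier_vec m \<Longrightarrow> g *\<^sub>v d \<in> carrier_vec m"
  by (rule mult_mat_vec_carrier[OF E_carrier])

lemma step_first:
  fixes c d :: "'a::comm_ring_1 vec"
  assumes loc: "local_ring TYPE('a)" and m: "2 \<le> m" and c: "c \<in> carrier_vec m" and d: "d \<in> carrier_vec m"
    and cd: "c \<bullet> d = 1"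
  shows "\<exists>g g'. invE m g g' \<and> (g *\<^sub>v d) $ 0 = 1"
proof -
  obtain k w where k: "k < m" and w: "w * d $ k = 1" using local_unit_entry[OF loc c d cd] by auto
  show ?thesis
  proof (cases "k = 0")
    case False
    then show ?thesis using step_unit[OF d k _ _ w, of 0] m by auto
  next
    case True
    obtain e e' where ee: "invE m e e'" and e1: "(e *\<^sub>v d) $ 1 = 1"
      using step_unit[OF d k _ _ w, of 1] m True by auto
    have ed: "e *\<^sub>v d \<in> carrier_vec m" using ee d mult_vec_carrier' unfolding invE_def by auto
    obtain f f' where ff: "invE m f f'" and f0: "(f *\<^sub>v (e *\<^sub>v d)) $ 0 = 1"
      using step_unit[OF ed _ _ _ , of 1 0 1] e1 m by auto
    have "(f * e) *\<^sub>v d = f *\<^sub>v (e *\<^sub>v d)" using ff ee d E_carrier unfolding invE_def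
      by (intro assoc_mult_mat_vec[of _ m m _ m], auto)
    then show ?thesis using invE_comp[OF ee ff] f0 by metis
  qed
qed

lemma T_neg_col: "x \<in> carrier_vec m \<Longrightarrow> y \<in> carrier_vec m \<Longrightarrow> T m x (- y) = T m (- x) y"
  by (rule eq_matI, auto simp: T_index)

lemma normalize:
  fixes c d :: "'a::comm_ring_1 vec"
  assumes loc: "local_ring TYPE('a)" and m: "2 \<le> m" and c: "c \<in> carrier_vec m" and d: "d \<in> carrier_vec m"
    and cd: "c \<bullet> d = 1"
  shows "\<exists>g g'. invE m g g' \<and> g *\<^sub>v d = unit_vec m 0 \<and> transpose_mat g' *\<^sub>v c = unit_vec m 0"
proof -
  have m0: "0 < m" using m by auto
  let ?e = "unit_vec m 0 :: 'a vec"
  obtain g1 g1' where g1: "invE m g1 g1'" and d10: "(g1 *\<^sub>v d) $ 0 = 1" using step_first[OF assms] by auto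
  define d1 where "d1 = g1 *\<^sub>v d"
  have d1c: "d1 \<in> carrier_vec m" unfolding d1_def using g1 d mult_vec_carrier' unfolding invE_def by auto
  define x where "x = - (d1 - ?e)"
  have xc: "x \<in> carrier_vec m" unfolding x_def using d1c by auto
  have x0: "x $ 0 = 0" unfolding x_def using d10 d1c m0 unfolding d1_def by simp
  have g2E: "T m x ?e \<in> E_group m" using E_col0[OF m0 xc x0] .
  have g2'E: "T m x (- ?e) \<in> E_group m" using E_col0[OF m0, of "- x"] xc x0 m0 T_neg_col[OF xc, of ?e] by simp
  have ex: "?e \<bullet> x = 0" using xc x0 m0 by simp
  have g2: "invE m (T m x ?e) (T m x (- ?e))" unfolding invE_def using g2E g2'E T_inv[OF xc _ ex] by auto
  have "T m x ?e *\<^sub>v d1 = d1 + (?e \<bullet> d1) \<cdot>\<^sub>v x" using xc d1c by (intro T_mult_vec, auto)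
  also have "?e \<bullet> d1 = 1" using d1c m0 d10 unfolding d1_def by simp
  also have "d1 + 1 \<cdot>\<^sub>v x = ?e" unfolding x_def using d1c by (intro eq_vecI, auto)
  finally have g2d: "T m x ?e *\<^sub>v d1 = ?e" .
  define G where "G = T m x ?e * g1"
  define G' where "G' = g1' * T m x (- ?e)"
  have GG: "invE m G G'" unfolding G_def G'_def by (rule invE_comp[OF g1 g2])
  have GC: "G \<in> carrier_mat m m" "G' \<in> carrier_mat m m" using GG E_carrier unfolding invE_def by auto
  have Gd: "G *\<^sub>v d = ?e" unfolding G_def using g2d g1 xc d E_carrier unfolding d1_def invE_def
    by (subst assoc_mult_mat_vec[of _ m m _ m], auto)
  define c1 where "c1 = transpose_mat G' *\<^sub>v c"
  have c1c: "c1 \<in> carrier_vec m" unfolding c1_def using GC c by auto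
  have G'e: "G' *\<^sub>v ?e = d" unfolding Gd[symmetric] using GC GG d unfolding invE_def
    by (subst assoc_mult_mat_vec[symmetric, of _ m m _ m], auto)
  have "c1 \<bullet> ?e = c \<bullet> (G' *\<^sub>v ?e)" unfolding c1_def using GC c m0 by (intro transpose_vec_mult_scalar, auto)
  hence c10: "c1 $ 0 = 1" using G'e cd c1c m0 by simp
  define z where "z = c1 - ?e"
  have zc: "z \<in> carrier_vec m" unfolding z_def using c1c by auto
  have z0: "z $ 0 = 0" unfolding z_def using c10 c1c m0 by simp
  have ze: "z \<bullet> ?e = 0" using zc z0 m0 by simp
  have g3E: "T m ?e z \<in> E_group m" using E_row0[OF m0 zc z0] .
  have g3'E: "T m ?e (- z) \<in> E_group m" using E_row0[OF m0, of "- z"] zc z0 m0 by simp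
  have g3: "invE m (T m ?e z) (T m ?e (- z))" unfolding invE_def using g3E g3'E T_inv[OF _ zc ze] by auto
  have g3e: "T m ?e z *\<^sub>v ?e = ?e" using zc ze m0 by (subst T_mult_vec, auto)
  have "transpose_mat (T m ?e (- z)) *\<^sub>v c1 = T m (- z) ?e *\<^sub>v c1" using zc by (simp add: T_transpose)
  also have "\<dots> = c1 + (?e \<bullet> c1) \<cdot>\<^sub>v (- z)" using zc c1c by (intro T_mult_vec, auto)
  also have "?e \<bullet> c1 = 1" using c10 c1c m0 by simp
  also have "c1 + 1 \<cdot>\<^sub>v (- z) = ?e" unfolding z_def using c1c by (intro eq_vecI, auto)
  finally have g3c: "transpose_mat (T m ?e (- z)) *\<^sub>v c1 = ?e" .
  define g where "g = T m ?e z * G"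
  define g' where "g' = G' * T m ?e (- z)"
  have gg: "invE m g g'" unfolding g_def g'_def by (rule invE_comp[OF GG g3])
  have "g *\<^sub>v d = T m ?e z *\<^sub>v (G *\<^sub>v d)" unfolding g_def using GC zc d
    by (intro assoc_mult_mat_vec[of _ m m _ m], auto)
  hence gd: "g *\<^sub>v d = ?e" using Gd g3e by simp
  have "transpose_mat g' = transpose_mat (T m ?e (- z)) * transpose_mat G'"
    unfolding g'_def using GC zc by (intro transpose_mult, auto)
  hence "transpose_mat g' *\<^sub>v c = transpose_mat (T m ?e (- z)) *\<^sub>v c1" unfolding c1_def using GC zc c
    by (simp, intro assoc_mult_mat_vec[of _ m m _ m], auto)
  hence "transpose_mat g' *\<^sub>v c = ?e" using g3c by simp
  then show ?thesis using gg gd by blast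
qed

lemma conj_mult:
  fixes g :: "'a::comm_ring_1 mat"
  assumes "g \<in> carrier_mat m m" "g' \<in> carrier_mat m m" "a \<in> carrier_mat m m" "b \<in> carrier_mat m m" "g * g' = 1\<^sub>m m"
  shows "g' * (a * b) * g = (g' * a * g) * (g' * b * g)"
proof -
  have e: "g * (g' * (b * g)) = b * g"
  proof -
    have "g * (g' * (b * g)) = (g * g') * (b * g)" using assms by (intro assoc_mult_mat[symmetric], auto)
    then show ?thesis using assms by simp
  qed
  have "(g' * a * g) * (g' * b * g) = g' * (a * (g * (g' * (b * g))))"
    using assms by (simp add: assoc_mult_mat[of _ m m _ m _ m])
  also have "\<dots> = g' * (a * (b * g))" unfolding e ..
  also have "\<dots> = g' * (a * b) * g" using assms by (simp add: assoc_mult_mat[of _ m m _ m _ m])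
  finally show ?thesis by simp
qed

lemma conj_back:
  fixes g :: "'a::comm_ring_1 mat"
  assumes "g \<in> carrier_mat m m" "g' \<in> carrier_mat m m" "X \<in> carrier_mat m m" "g * g' = 1\<^sub>m m" "g' * g = 1\<^sub>m m"
  shows "g' * (g * X * g') * g = X"
proof -
  have "g' * (g * X * g') * g = g' * (g * (X * (g' * g)))"
    using assms by (simp add: assoc_mult_mat[of _ m m _ m _ m])
  also have "\<dots> = g' * (g * X)" using assms by simp
  also have "\<dots> = (g' * g) * X" using assms by (intro assoc_mult_mat[symmetric], auto)
  also have "\<dots> = X" using assms by simp
  finally show ?thesis .
qed

locale nsetup =
  fixes m :: nat and c d :: "'a::comm_ring_1 vec" and \<nu> \<mu> :: "'a mat"
  assumes loc: "local_ring TYPE('a)" and m: "2 \<le> m"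
    and c: "c \<in> carrier_vec m" and d: "d \<in> carrier_vec m"
    and \<nu>: "\<nu> \<in> carrier_mat m m" and \<mu>: "\<mu> \<in> carrier_mat m m"
    and cd: "c \<bullet> d = 1" and \<nu>d: "\<nu> *\<^sub>v d = 0\<^sub>v m" and \<mu>c: "transpose_mat \<mu> *\<^sub>v c = 0\<^sub>v m"
    and \<mu>\<nu>: "\<mu> * \<nu> = T m d (- c)"
begin

definition Sp where "Sp = {1\<^sub>m m + outer d v * \<nu> | v. v \<in> carrier_vec m} \<union> {1\<^sub>m m + \<mu> * outer v c | v. v \<in> carrier_vec m}"
definition EP where "EP = gen_group m Sp"

lemma alpha_T: "v \<in> carrier_vec m \<Longrightarrow> 1\<^sub>m m + outer d v * \<nu> = T m d (transpose_mat \<nu> *\<^sub>v v)"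
  unfolding T_def using d \<nu> by (simp add: outer_mat[of \<nu> m m])

lemma beta_T: "v \<in> carrier_vec m \<Longrightarrow> 1\<^sub>m m + \<mu> * outer v c = T m (\<mu> *\<^sub>v v) c"
  unfolding T_def using c \<mu> by (simp add: mat_outer[of \<mu> m m])

lemma alpha_orth: "v \<in> carrier_vec m \<Longrightarrow> (transpose_mat \<nu> *\<^sub>v v) \<bullet> d = 0"
  using transpose_vec_mult_scalar[OF \<nu> d, of v] \<nu>d by simp

lemma beta_orth: "v \<in> carrier_vec m \<Longrightarrow> c \<bullet> (\<mu> *\<^sub>v v) = 0"
  using transpose_vec_mult_scalar[OF \<mu> _ c, of v] \<mu>c by simp

lemma Sp_carrier: "Sp \<subseteq> carrier_mat m m"
  unfolding Sp_def using alpha_T beta_T d c \<mu> \<nu> by auto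

lemma row_in_Sp: assumes y: "y \<in> carrier_vec m" and yd: "y \<bullet> d = 0" shows "T m d y \<in> Sp"
proof -
  define v where "v = transpose_mat \<mu> *\<^sub>v y"
  have vc: "v \<in> carrier_vec m" unfolding v_def using \<mu> y by auto
  have "transpose_mat \<nu> *\<^sub>v v = (transpose_mat \<nu> * transpose_mat \<mu>) *\<^sub>v y"
    unfolding v_def using \<mu> \<nu> y by (intro assoc_mult_mat_vec[symmetric, of _ m m _ m], auto)
  also have "transpose_mat \<nu> * transpose_mat \<mu> = transpose_mat (\<mu> * \<nu>)"
    using \<mu> \<nu> by (intro transpose_mult[symmetric], auto)
  also have "\<dots> = T m (- c) d" unfolding \<mu>\<nu> using c d by (simp add: T_transpose)
  also have "T m (- c) d *\<^sub>v y = y + (d \<bullet> y) \<cdot>\<^sub>v (- c)" using c d y by (intro T_mult_vec, auto)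
  also have "d \<bullet> y = 0" using yd comm_scalar_prod[OF y d] by simp
  also have "y + 0 \<cdot>\<^sub>v (- c) = y" using y c by (intro eq_vecI, auto)
  finally have "transpose_mat \<nu> *\<^sub>v v = y" .
  then show ?thesis unfolding Sp_def using alpha_T[OF vc] vc by auto
qed

lemma col_in_Sp: assumes x: "x \<in> carrier_vec m" and cx: "c \<bullet> x = 0" shows "T m x c \<in> Sp"
proof -
  define v where "v = \<nu> *\<^sub>v x"
  have vc: "v \<in> carrier_vec m" unfolding v_def using \<nu> x by auto
  have "\<mu> *\<^sub>v v = (\<mu> * \<nu>) *\<^sub>v x" unfolding v_def using \<mu> \<nu> x by (intro assoc_mult_mat_vec[symmetric, of _ m m _ m], auto)
  also have "\<dots> = x + ((- c) \<bullet> x) \<cdot>\<^sub>v d" unfolding \<mu>\<nu> using c d x by (intro T_mult_vec, auto)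
  also have "(- c) \<bullet> x = 0" using cx c x by simp
  also have "x + 0 \<cdot>\<^sub>v d = x" using x d by (intro eq_vecI, auto)
  finally have "\<mu> *\<^sub>v v = x" .
  then show ?thesis unfolding Sp_def using beta_T[OF vc] vc by auto
qed

lemma EP_gen: "X \<in> Sp \<Longrightarrow> X \<in> EP" unfolding EP_def by (rule gg_gen[OF Sp_carrier])
lemma EP_mult: "a \<in> EP \<Longrightarrow> b \<in> EP \<Longrightarrow> a * b \<in> EP" unfolding EP_def by (rule gg_mult[OF Sp_carrier])

lemma Sp_cases: assumes "X \<in> Sp"
  obtains y where "y \<in> carrier_vec m" "y \<bullet> d = 0" "X = T m d y"
  | x where "x \<in> carrier_vec m" "c \<bullet> x = 0" "X = T m x c"
  using assms unfolding Sp_def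
proof (elim UnE, goal_cases)
  case 1
  then obtain v where v: "v \<in> carrier_vec m" "X = 1\<^sub>m m + outer d v * \<nu>" by auto
  show ?case by (rule 1(1)[of "transpose_mat \<nu> *\<^sub>v v"], insert v \<nu> alpha_T alpha_orth, auto)
next
  case 2
  then obtain v where v: "v \<in> carrier_vec m" "X = 1\<^sub>m m + \<mu> * outer v c" by auto
  show ?case by (rule 2(2)[of "\<mu> *\<^sub>v v"], insert v \<mu> beta_T beta_orth, auto)
qed

end

context nsetup begin

lemma m0: "0 < m" using m by auto

lemma main_eq: "E_group m = EP"
proof -
  let ?e = "unit_vec m 0 :: 'a vec"
  obtain g g' where gg: "invE m g g'" and gd: "g *\<^sub>v d = ?e" and gc: "transpose_mat g' *\<^sub>v c = ?e"
    using normalize[OF loc m c d cd] by auto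
  have gC: "g \<in> carrier_mat m m" "g' \<in> carrier_mat m m" and gE: "g \<in> E_group m" "g' \<in> E_group m"
    and gi: "g * g' = 1\<^sub>m m" "g' * g = 1\<^sub>m m" using gg E_carrier unfolding invE_def by auto
  have g'e: "g' *\<^sub>v ?e = d" unfolding gd[symmetric] using gC gi d
    by (subst assoc_mult_mat_vec[symmetric, of _ m m _ m], auto)
  have gte: "transpose_mat g *\<^sub>v ?e = c"
  proof -
    have "transpose_mat g *\<^sub>v ?e = (transpose_mat g * transpose_mat g') *\<^sub>v c" unfolding gc[symmetric] using gC c
      by (subst assoc_mult_mat_vec[of _ m m _ m], auto)
    also have "transpose_mat g * transpose_mat g' = transpose_mat (g' * g)" using gC by (intro transpose_mult[symmetric], auto)
    finally show ?thesis using gi c by simp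
  qed
  have rowE: "T m d y \<in> E_group m" if y: "y \<in> carrier_vec m" and yd: "y \<bullet> d = 0" for y
  proof -
    define z where "z = transpose_mat g' *\<^sub>v y"
    have zc: "z \<in> carrier_vec m" unfolding z_def using gC y by auto
    have "z \<bullet> ?e = y \<bullet> (g' *\<^sub>v ?e)" unfolding z_def using gC y m0 by (intro transpose_vec_mult_scalar, auto)
    hence "z $ 0 = 0" using g'e yd zc m0 by simp
    hence zE: "T m ?e z \<in> E_group m" using E_row0[OF m0 zc] by simp
    have "g * T m d y * g' = T m ?e z" unfolding z_def gd[symmetric] using gC gi d y by (intro T_conj, auto)
    hence "T m d y = g' * T m ?e z * g" using conj_back[OF gC(1) gC(2) _ gi, of "T m d y"] d y by simp
    then show ?thesis using zE gE E_mult by metis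
  qed
  have colE: "T m x c \<in> E_group m" if x: "x \<in> carrier_vec m" and cx: "c \<bullet> x = 0" for x
  proof -
    define z where "z = g *\<^sub>v x"
    have zc: "z \<in> carrier_vec m" unfolding z_def using gC x by auto
    have "(transpose_mat g *\<^sub>v ?e) \<bullet> x = ?e \<bullet> (g *\<^sub>v x)" using gC x m0 by (intro transpose_vec_mult_scalar, auto)
    hence "z $ 0 = 0" using gte cx zc m0 unfolding z_def by simp
    hence zE: "T m z ?e \<in> E_group m" using E_col0[OF m0 zc] by simp
    have "g * T m x c * g' = T m z ?e" unfolding z_def gc[symmetric] using gC gi c x by (intro T_conj, auto)
    hence "T m x c = g' * T m z ?e * g" using conj_back[OF gC(1) gC(2) _ gi, of "T m x c"] c x by simp
    then show ?thesis using zE gE E_mult by metis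
  qed
  have dir1: "EP \<subseteq> E_group m" unfolding EP_def
  proof (rule gg_min)
    show "1\<^sub>m m \<in> E_group m" by (rule E_one)
    show "\<And>a b. a \<in> E_group m \<Longrightarrow> b \<in> E_group m \<Longrightarrow> a * b \<in> E_group m" by (rule E_mult)
    show "Sp \<subseteq> E_group m"
    proof
      fix X assume "X \<in> Sp"
      then show "X \<in> E_group m" by (cases rule: Sp_cases, insert rowE colE, auto)
    qed
    fix X X' assume X: "X \<in> Sp" and X': "X' \<in> carrier_mat m m" "X * X' = 1\<^sub>m m" "X' * X = 1\<^sub>m m"
    from X show "X' \<in> E_group m"
    proof (cases rule: Sp_cases)
      case (1 y)
      have "X' = T m d (- y)" using inv_unique[of X m "T m d (- y)" X'] T_inv[of d m y] 1 X' d by auto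
      moreover have "(- y) \<bullet> d = 0" using 1 d by simp
      ultimately show ?thesis using rowE[of "- y"] 1 by simp
    next
      case (2 x)
      have "X' = T m x (- c)" using inv_unique[of X m "T m x (- c)" X'] T_inv[of x m c] 2 X' c
        by (auto simp: comm_scalar_prod[of c m x])
      also have "\<dots> = T m (- x) c" using T_neg_col 2 c by auto
      finally have "X' = T m (- x) c" .
      moreover have "c \<bullet> (- x) = 0" using 2 c by simp
      ultimately show ?thesis using colE[of "- x"] 2 by simp
    qed
  qed
  define H where "H = {k. k \<in> carrier_mat m m \<and> g' * k * g \<in> EP}"
  have Hrow: "T m ?e z \<in> H" if zc: "z \<in> carrier_vec m" and z0: "z $ 0 = 0" for z
  proof -
    define y where "y = transpose_mat g *\<^sub>v z"
    have yc: "y \<in> carrier_vec m" unfolding y_def using gC zc by auto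
    have "y \<bullet> d = z \<bullet> (g *\<^sub>v d)" unfolding y_def using gC zc d by (intro transpose_vec_mult_scalar, auto)
    hence yd: "y \<bullet> d = 0" using gd zc z0 m0 by simp
    have "g' * T m ?e z * g = T m d y" unfolding y_def g'e[symmetric] using gC gi zc by (intro T_conj, auto)
    then show ?thesis unfolding H_def using EP_gen[OF row_in_Sp[OF yc yd]] zc by auto
  qed
  have Hcol: "T m x ?e \<in> H" if xc: "x \<in> carrier_vec m" and x0: "x $ 0 = 0" for x
  proof -
    define y where "y = g' *\<^sub>v x"
    have yc: "y \<in> carrier_vec m" unfolding y_def using gC xc by auto
    have "(transpose_mat g' *\<^sub>v c) \<bullet> x = c \<bullet> (g' *\<^sub>v x)" using gC xc c by (intro transpose_vec_mult_scalar, auto)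
    hence cy: "c \<bullet> y = 0" using gc xc x0 m0 unfolding y_def by simp
    have "g' * T m x ?e * g = T m y c" unfolding y_def gte[symmetric] using gC gi xc by (intro T_conj, auto)
    then show ?thesis unfolding H_def using EP_gen[OF col_in_Sp[OF yc cy]] xc by auto
  qed
  have Hmult: "a * b \<in> H" if "a \<in> H" "b \<in> H" for a b
    using that conj_mult[OF gC, of a b] gi EP_mult unfolding H_def by auto
  have Hone: "1\<^sub>m m \<in> H" unfolding H_def using gC gi by (simp add: EP_def gg_one)
  have Helem: "elem_mat m i j l \<in> H" if ij: "i < m" "j < m" "i \<noteq> j" for i j l
  proof -
    have el: "elem_mat m i j l = T m (unit_vec m i) (l \<cdot>\<^sub>v unit_vec m j)" using elem_T ij by auto
    consider "i = 0" | "j = 0" | "i \<noteq> 0" "j \<noteq> 0" by auto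
    then show ?thesis
    proof cases
      case 1
      then show ?thesis unfolding el using Hrow[of "l \<cdot>\<^sub>v unit_vec m j"] ij by auto
    next
      case 2
      have "elem_mat m i j l = T m (l \<cdot>\<^sub>v unit_vec m i) ?e" using el 2 T_smult[of "unit_vec m i" m "unit_vec m 0" l] ij by simp
      then show ?thesis using Hcol[of "l \<cdot>\<^sub>v unit_vec m i"] ij 2 by auto
    next
      case 3
      define x where "x = l \<cdot>\<^sub>v unit_vec m i"
      have xc: "x \<in> carrier_vec m" and x0: "x $ 0 = 0" unfolding x_def using ij 3 m0 by auto
      have ejc: "unit_vec m j \<in> carrier_vec m" and ej0: "unit_vec m j $ 0 = (0::'a)" using ij 3 m0 by auto
      define A where "A = T m x ?e"
      define A' where "A' = T m x (- ?e)"
      define B where "B = T m ?e (unit_vec m j)"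
      define B' where "B' = T m ?e (- unit_vec m j)"
      have ex: "?e \<bullet> x = 0" using xc x0 m0 by simp
      have AA: "A * A' = 1\<^sub>m m" unfolding A_def A'_def using T_inv[OF xc _ ex] m0 by auto
      have AC: "A \<in> carrier_mat m m" "A' \<in> carrier_mat m m" unfolding A_def A'_def using xc by auto
      have "A *\<^sub>v ?e = ?e + (?e \<bullet> ?e) \<cdot>\<^sub>v x" unfolding A_def using xc m0 by (intro T_mult_vec, auto)
      also have "\<dots> = ?e + x" using m0 xc by simp
      finally have Ae: "A *\<^sub>v ?e = ?e + x" .
      have "transpose_mat A' *\<^sub>v unit_vec m j = T m (- ?e) x *\<^sub>v unit_vec m j" unfolding A'_def using xc by (simp add: T_transpose)
      also have "\<dots> = unit_vec m j + (x \<bullet> unit_vec m j) \<cdot>\<^sub>v (- ?e)" using xc ejc by (intro T_mult_vec, auto)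
      also have "x \<bullet> unit_vec m j = 0" unfolding x_def using ij by simp
      also have "unit_vec m j + 0 \<cdot>\<^sub>v (- ?e) = unit_vec m j" by (intro eq_vecI, auto)
      finally have A'e: "transpose_mat A' *\<^sub>v unit_vec m j = unit_vec m j" .
      have "A * B * A' = T m (?e + x) (unit_vec m j)" unfolding B_def using T_conj[OF AC AA, of ?e "unit_vec m j"] Ae A'e ejc by simp
      hence "A * B * A' * B' = T m (?e + x) (unit_vec m j) * T m (- ?e) (unit_vec m j)"
        unfolding B'_def using T_neg_col[of ?e m "unit_vec m j"] ejc by simp
      also have "\<dots> = T m (?e + x + - ?e) (unit_vec m j)" using xc ejc ej0 m0
        by (intro T_mult_row, auto)
      also have "?e + x + - ?e = x" using xc by (intro eq_vecI, auto)
      also have "T m x (unit_vec m j) = elem_mat m i j l" unfolding el x_def using ij by (intro T_smult, auto)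
      finally have eq: "elem_mat m i j l = A * B * A' * B'" by simp
      have "A \<in> H" unfolding A_def using Hcol xc x0 by auto
      moreover have "A' \<in> H" unfolding A'_def using Hcol[of "- x"] xc x0 m0 T_neg_col[OF xc, of ?e] by auto
      moreover have "B \<in> H" unfolding B_def using Hrow ejc ej0 by auto
      moreover have "B' \<in> H" unfolding B'_def using Hrow[of "- unit_vec m j"] ejc ej0 m0 by auto
      ultimately show ?thesis unfolding eq using Hmult by blast
    qed
  qed
  have EH: "E_group m \<subseteq> H" unfolding E_group_SE
  proof (rule gg_min)
    show "1\<^sub>m m \<in> H" by (rule Hone)
    show "\<And>a b. a \<in> H \<Longrightarrow> b \<in> H \<Longrightarrow> a * b \<in> H" by (rule Hmult)
    show "SE m \<subseteq> H" unfolding SE_def using Helem by auto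
    fix X X' :: "'a mat" assume X: "X \<in> SE m" and X': "X' \<in> carrier_mat m m" "X * X' = 1\<^sub>m m" "X' * X = 1\<^sub>m m"
    from X obtain i j l where ij: "i < m" "j < m" "i \<noteq> j" and Xe: "X = elem_mat m i j l" unfolding SE_def by auto
    have yx: "(l \<cdot>\<^sub>v unit_vec m j) \<bullet> unit_vec m i = 0" using ij by simp
    have "X' = T m (unit_vec m i) (- (l \<cdot>\<^sub>v unit_vec m j))"
      using inv_unique[of X m "T m (unit_vec m i) (- (l \<cdot>\<^sub>v unit_vec m j))" X'] T_inv[OF _ _ yx] X' ij
      unfolding Xe by (auto simp: elem_T)
    also have "\<dots> = elem_mat m i j (- l)" using ij by (simp add: elem_T neg_smult_vec)
    finally show "X' \<in> H" using Helem ij by simp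
  qed
  have dir2: "E_group m \<subseteq> EP"
  proof
    fix h :: "'a mat" assume h: "h \<in> E_group m"
    have "g * h * g' \<in> E_group m" using gE h E_mult by blast
    hence "g' * (g * h * g') * g \<in> EP" using EH unfolding H_def by auto
    moreover have "g' * (g * h * g') * g = h" using conj_back[OF gC(1) gC(2) _ gi] E_carrier[OF h] by auto
    ultimately show "h \<in> EP" by simp
  qed
  show ?thesis using dir1 dir2 by auto
qed

end

lemma mult_split:
  fixes A B :: "'a::comm_ring_1 mat"
  assumes A: "A \<in> carrier_mat (Suc m) (Suc m)" and B: "B \<in> carrier_mat (Suc m) (Suc m)"
    and a: "a < Suc m" and b: "b < Suc m"
  shows "(A * B) $$ (a,b) = A $$ (a,0) * B $$ (0,b) + (\<Sum>k\<in>{0..<m}. A $$ (a, Suc k) * B $$ (Suc k, b))"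
proof -
  have "(A * B) $$ (a,b) = (\<Sum>k\<in>{0..<Suc m}. A $$ (a,k) * B $$ (k,b))"
    using assms by (simp add: scalar_prod_def del: sum.op_ivl_Suc)
  also have "\<dots> = A $$ (a,0) * B $$ (0,b) + (\<Sum>k\<in>{0..<m}. A $$ (a, Suc k) * B $$ (Suc k, b))"
    by (subst sum.atLeast0_lessThan_Suc_shift, simp)
  finally show ?thesis .
qed

lemma main_result:
  fixes \<phi> \<psi> :: "'a::comm_ring_1 mat" and n :: nat
  assumes loc: "local_ring TYPE('a)"
    and n: "n \<ge> 2"
    and \<phi>: "\<phi> \<in> carrier_mat (2*n) (2*n)"
    and alt: "alternating \<phi>"
    and "pfaffian \<phi> = 1"
    and \<psi>: "\<psi> \<in> carrier_mat (2*n) (2*n)"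
    and \<phi>\<psi>: "\<phi> * \<psi> = 1\<^sub>m (2*n)"
  shows "E_group (2*n - 1) = E_phi \<phi> \<psi>"
proof -
  define m where "m = 2 * n - 1"
  have N: "2 * n = Suc m" unfolding m_def using n by auto
  have m2: "2 \<le> m" unfolding m_def using n by auto
  have \<phi>C: "\<phi> \<in> carrier_mat (Suc m) (Suc m)" and \<psi>C: "\<psi> \<in> carrier_mat (Suc m) (Suc m)" using \<phi> \<psi> N by auto
  have \<phi>\<psi>1: "\<phi> * \<psi> = 1\<^sub>m (Suc m)" using \<phi>\<psi> N by simp
  from alt obtain \<nu>0 where \<nu>0: "\<nu>0 \<in> carrier_mat (Suc m) (Suc m)" and \<phi>\<nu>: "\<phi> = \<nu>0 - transpose_mat \<nu>0"
    unfolding alternating_def using \<phi>C by auto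
  have \<phi>ij: "\<phi> $$ (i,j) = \<nu>0 $$ (i,j) - \<nu>0 $$ (j,i)" if "i < Suc m" "j < Suc m" for i j
    using that \<nu>0 unfolding \<phi>\<nu> by auto
  have \<phi>anti: "\<phi> $$ (j,i) = - \<phi> $$ (i,j)" if "i < Suc m" "j < Suc m" for i j
    using \<phi>ij[OF that] \<phi>ij[OF that(2,1)] by simp
  have \<phi>diag: "\<phi> $$ (i,i) = 0" if "i < Suc m" for i using \<phi>ij[OF that that] by simp
  define L where "L = - transpose_mat \<psi>"
  have LC: "L \<in> carrier_mat (Suc m) (Suc m)" unfolding L_def using \<psi>C by auto
  have L\<phi>: "L * \<phi> = 1\<^sub>m (Suc m)"
  proof (rule eq_matI)
    fix i j assume ij: "i < dim_row (1\<^sub>m (Suc m))" "j < dim_col (1\<^sub>m (Suc m) :: 'a mat)"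
    hence i: "i < Suc m" and j: "j < Suc m" by auto
    have "(L * \<phi>) $$ (i,j) = (\<Sum>k\<in>{0..<Suc m}. - \<psi> $$ (k,i) * \<phi> $$ (k,j))"
      unfolding L_def using i j \<psi>C \<phi>C by (simp add: scalar_prod_def sum_negf del: sum.op_ivl_Suc)
    also have "\<dots> = (\<Sum>k\<in>{0..<Suc m}. \<phi> $$ (j,k) * \<psi> $$ (k,i))"
    proof (rule sum.cong)
      fix k assume "k \<in> {0..<Suc m}"
      thus "- \<psi> $$ (k,i) * \<phi> $$ (k,j) = \<phi> $$ (j,k) * \<psi> $$ (k,i)" using \<phi>anti[of k j] j by (simp add: algebra_simps)
    qed simp
    also have "\<dots> = (\<phi> * \<psi>) $$ (j,i)" using i j \<psi>C \<phi>C by (simp add: scalar_prod_def)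
    also have "\<dots> = 1\<^sub>m (Suc m) $$ (i,j)" unfolding \<phi>\<psi>1 using i j by simp
    finally show "(L * \<phi>) $$ (i,j) = 1\<^sub>m (Suc m) $$ (i,j)" .
  qed (insert LC \<phi>C, auto)
  have "L = L * (\<phi> * \<psi>)" unfolding \<phi>\<psi>1 using LC by simp
  also have "\<dots> = (L * \<phi>) * \<psi>" using LC \<phi>C \<psi>C by (intro assoc_mult_mat[symmetric], auto)
  also have "\<dots> = \<psi>" unfolding L\<phi> using \<psi>C by simp
  finally have L\<psi>: "L = \<psi>" .
  have \<psi>\<phi>: "\<psi> * \<phi> = 1\<^sub>m (Suc m)" using L\<phi> L\<psi> by simp
  have \<psi>anti: "\<psi> $$ (j,i) = - \<psi> $$ (i,j)" if "i < Suc m" "j < Suc m" for i j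
  proof -
    have "\<psi> $$ (j,i) = L $$ (j,i)" using L\<psi> by simp
    then show ?thesis unfolding L_def using that \<psi>C by simp
  qed
  define w where "w = col \<psi> 0"
  have wc: "w \<in> carrier_vec (Suc m)" unfolding w_def carrier_vec_def using \<psi>C by simp
  have quad: "w \<bullet> (\<phi> *\<^sub>v w) = 0"
  proof -
    have "w \<bullet> (\<phi> *\<^sub>v w) = (\<Sum>a\<in>{0..<Suc m}. w $ a * (\<Sum>b\<in>{0..<Suc m}. (\<nu>0 $$ (a,b) - \<nu>0 $$ (b,a)) * w $ b))"
      using wc \<phi>C \<phi>ij by (simp add: scalar_prod_def)
    also have "\<dots> = (\<Sum>a\<in>{0..<Suc m}. \<Sum>b\<in>{0..<Suc m}. w $ a * w $ b * \<nu>0 $$ (a,b))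
        - (\<Sum>a\<in>{0..<Suc m}. \<Sum>b\<in>{0..<Suc m}. w $ a * w $ b * \<nu>0 $$ (b,a))"
      by (simp add: sum_distrib_left sum_subtractf algebra_simps)
    also have "(\<Sum>a\<in>{0..<Suc m}. \<Sum>b\<in>{0..<Suc m}. w $ a * w $ b * \<nu>0 $$ (b,a))
        = (\<Sum>a\<in>{0..<Suc m}. \<Sum>b\<in>{0..<Suc m}. w $ a * w $ b * \<nu>0 $$ (a,b))"
      by (subst sum.swap, simp add: mult.commute)
    finally show ?thesis by simp
  qed
  have "\<phi> *\<^sub>v w = col (\<phi> * \<psi>) 0" unfolding w_def using \<phi>C \<psi>C by (intro eq_vecI, auto)
  also have "\<dots> = unit_vec (Suc m) 0" unfolding \<phi>\<psi>1 by (intro eq_vecI, auto)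
  finally have "w \<bullet> unit_vec (Suc m) 0 = 0" using quad by simp
  hence \<psi>00: "\<psi> $$ (0,0) = 0" using wc unfolding w_def using \<psi>C by simp
  define c where "c = blk_c \<phi>"
  define d where "d = blk_d \<psi>"
  define \<nu> where "\<nu> = blk_low \<phi>"
  define \<mu> where "\<mu> = blk_low \<psi>"
  have cC: "c \<in> carrier_vec m" unfolding c_def blk_c_def using \<phi>C by auto
  have dC: "d \<in> carrier_vec m" unfolding d_def blk_d_def using \<psi>C by auto
  have \<nu>C: "\<nu> \<in> carrier_mat m m" unfolding \<nu>_def blk_low_def using \<phi>C by auto
  have \<mu>C: "\<mu> \<in> carrier_mat m m" unfolding \<mu>_def blk_low_def using \<psi>C by auto
  have ci: "c $ i = - \<phi> $$ (0, Suc i)" if "i < m" for i unfolding c_def blk_c_def using that \<phi>C by auto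
  have di: "d $ i = \<psi> $$ (0, Suc i)" if "i < m" for i unfolding d_def blk_d_def using that \<psi>C by auto
  have \<nu>i: "\<nu> $$ (i,j) = \<phi> $$ (Suc i, Suc j)" if "i < m" "j < m" for i j unfolding \<nu>_def blk_low_def using that \<phi>C by auto
  have \<mu>i: "\<mu> $$ (i,j) = \<psi> $$ (Suc i, Suc j)" if "i < m" "j < m" for i j unfolding \<mu>_def blk_low_def using that \<psi>C by auto
  have "1 = (\<psi> * \<phi>) $$ (0,0)" unfolding \<psi>\<phi> by simp
  also have "\<dots> = \<psi> $$ (0,0) * \<phi> $$ (0,0) + (\<Sum>k\<in>{0..<m}. \<psi> $$ (0, Suc k) * \<phi> $$ (Suc k, 0))"
    by (rule mult_split[OF \<psi>C \<phi>C], auto)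
  also have "\<dots> = (\<Sum>k\<in>{0..<m}. \<psi> $$ (0, Suc k) * \<phi> $$ (Suc k, 0))" using \<psi>00 by simp
  also have "\<dots> = (\<Sum>k\<in>{0..<m}. c $ k * d $ k)"
  proof (rule sum.cong)
    fix k assume "k \<in> {0..<m}"
    thus "\<psi> $$ (0, Suc k) * \<phi> $$ (Suc k, 0) = c $ k * d $ k" using ci[of k] di[of k] \<phi>anti[of 0 "Suc k"] by simp
  qed simp
  also have "\<dots> = c \<bullet> d" unfolding scalar_prod_def using dC by simp
  finally have cd: "c \<bullet> d = 1" by simp
  have \<nu>d: "\<nu> *\<^sub>v d = 0\<^sub>v m"
  proof (rule eq_vecI)
    fix j assume "j < dim_vec (0\<^sub>v m :: 'a vec)"
    hence j: "j < m" by simp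
    have "0 = (\<psi> * \<phi>) $$ (0, Suc j)" unfolding \<psi>\<phi> using j by simp
    also have "\<dots> = \<psi> $$ (0,0) * \<phi> $$ (0,Suc j) + (\<Sum>k\<in>{0..<m}. \<psi> $$ (0, Suc k) * \<phi> $$ (Suc k, Suc j))"
      by (rule mult_split[OF \<psi>C \<phi>C], insert j, auto)
    also have "\<dots> = (\<Sum>k\<in>{0..<m}. \<psi> $$ (0, Suc k) * \<phi> $$ (Suc k, Suc j))" using \<psi>00 by simp
    also have "\<dots> = (\<Sum>k\<in>{0..<m}. - (\<nu> $$ (j,k) * d $ k))"
    proof (rule sum.cong)
      fix k assume "k \<in> {0..<m}"
      thus "\<psi> $$ (0, Suc k) * \<phi> $$ (Suc k, Suc j) = - (\<nu> $$ (j,k) * d $ k)"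
        using \<nu>i[of j k] di[of k] \<phi>anti[of "Suc j" "Suc k"] j by simp
    qed simp
    also have "\<dots> = - (\<Sum>k\<in>{0..<m}. \<nu> $$ (j,k) * d $ k)" by (simp add: sum_negf)
    also have "(\<Sum>k\<in>{0..<m}. \<nu> $$ (j,k) * d $ k) = (\<nu> *\<^sub>v d) $ j" using j \<nu>C dC by (simp add: scalar_prod_def)
    finally show "(\<nu> *\<^sub>v d) $ j = 0\<^sub>v m $ j" using j by simp
  qed (insert \<nu>C, auto)
  have \<mu>c: "transpose_mat \<mu> *\<^sub>v c = 0\<^sub>v m"
  proof (rule eq_vecI)
    fix j assume "j < dim_vec (0\<^sub>v m :: 'a vec)"
    hence j: "j < m" by simp
    have "0 = (\<phi> * \<psi>) $$ (0, Suc j)" unfolding \<phi>\<psi>1 using j by simp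
    also have "\<dots> = \<phi> $$ (0,0) * \<psi> $$ (0,Suc j) + (\<Sum>k\<in>{0..<m}. \<phi> $$ (0, Suc k) * \<psi> $$ (Suc k, Suc j))"
      by (rule mult_split[OF \<phi>C \<psi>C], insert j, auto)
    also have "\<dots> = (\<Sum>k\<in>{0..<m}. \<phi> $$ (0, Suc k) * \<psi> $$ (Suc k, Suc j))" using \<phi>diag[of 0] by simp
    also have "\<dots> = (\<Sum>k\<in>{0..<m}. - (\<mu> $$ (k,j) * c $ k))"
    proof (rule sum.cong)
      fix k assume "k \<in> {0..<m}"
      thus "\<phi> $$ (0, Suc k) * \<psi> $$ (Suc k, Suc j) = - (\<mu> $$ (k,j) * c $ k)"
        using \<mu>i[of k j] ci[of k] j by simp
    qed simp
    also have "\<dots> = - (\<Sum>k\<in>{0..<m}. \<mu> $$ (k,j) * c $ k)" by (simp add: sum_negf)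
    also have "(\<Sum>k\<in>{0..<m}. \<mu> $$ (k,j) * c $ k) = (transpose_mat \<mu> *\<^sub>v c) $ j" using j \<mu>C cC by (simp add: scalar_prod_def)
    finally show "(transpose_mat \<mu> *\<^sub>v c) $ j = 0\<^sub>v m $ j" using j by simp
  qed (insert \<mu>C, auto)
  have \<mu>\<nu>: "\<mu> * \<nu> = T m d (- c)"
  proof (rule eq_matI)
    fix i j assume "i < dim_row (T m d (- c))" "j < dim_col (T m d (- c))"
    hence i: "i < m" and j: "j < m" using dC cC by auto
    have "(if i = j then 1 else 0) = (\<psi> * \<phi>) $$ (Suc i, Suc j)" unfolding \<psi>\<phi> using i j by simp
    also have "\<dots> = \<psi> $$ (Suc i,0) * \<phi> $$ (0,Suc j) + (\<Sum>k\<in>{0..<m}. \<psi> $$ (Suc i, Suc k) * \<phi> $$ (Suc k, Suc j))"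
      by (rule mult_split[OF \<psi>C \<phi>C], insert i j, auto)
    also have "\<psi> $$ (Suc i,0) * \<phi> $$ (0,Suc j) = d $ i * c $ j" using \<psi>anti[of 0 "Suc i"] i j di ci by simp
    also have "(\<Sum>k\<in>{0..<m}. \<psi> $$ (Suc i, Suc k) * \<phi> $$ (Suc k, Suc j)) = (\<mu> * \<nu>) $$ (i,j)"
      using i j \<mu>C \<nu>C \<mu>i \<nu>i by (simp add: scalar_prod_def)
    finally have "(\<mu> * \<nu>) $$ (i,j) = (if i = j then 1 else 0) - d $ i * c $ j" by (simp add: algebra_simps)
    then show "(\<mu> * \<nu>) $$ (i,j) = T m d (- c) $$ (i,j)" using i j dC cC by (simp add: T_index)
  qed (insert \<mu>C \<nu>C dC cC, auto)
  interpret nsetup m c d \<nu> \<mu> by (unfold_locales, fact loc, fact m2, fact cC, fact dC, fact \<nu>C, fact \<mu>C, fact cd, fact \<nu>d, fact \<mu>c, fact \<mu>\<nu>)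
  have dimr: "dim_row \<phi> - 1 = m" using \<phi>C by simp
  have "Sp = {alpha_mat \<phi> \<psi> v | v. v \<in> carrier_vec (dim_row \<phi> - 1)} \<union> {beta_mat \<phi> \<psi> v | v. v \<in> carrier_vec (dim_row \<phi> - 1)}"
    unfolding Sp_def unfolding dimr alpha_mat_def beta_mat_def c_def d_def \<nu>_def \<mu>_def ..
  hence "E_phi \<phi> \<psi> = EP" unfolding EP_def unfolding E_phi_def dimr by simp
  then show ?thesis using main_eq unfolding m_def by simp
qed

theorem corollary4p5:
  fixes \<phi> \<psi> :: "'a::comm_ring_1 mat" and n :: nat
  assumes "local_ring TYPE('a)"
    and "n \<ge> 2"
    and "\<phi> \<in> carrier_mat (2*n) (2*n)"
    and "alternating \<phi>"
    and "pfaffian \<phi> = 1"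
    and "\<psi> \<in> carrier_mat (2*n) (2*n)"
    and "\<phi> * \<psi> = 1\<^sub>m (2*n)"
  shows "E_group (2*n - 1) = E_phi \<phi> \<psi>"
    using assms by (rule main_result)

end
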